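(* For the hypergeometric weights described in the context, the step-line recursion coefficients satisfy \begin{align*} \alpha&=(\vartheta H)H^{-1}=\mathfrak a_{+}S^{[1]}-S^{[1]},\\ \beta&=-\vartheta S^{[1]}=\mathfrak a_{+}S^{[2]}-S^{[2]}-S^{[1]}\mathfrak a_{-}\big((\vartheta H)H^{-1}\big),\\ \gamma&=-\vartheta S^{[2]}+(\vartheta\mathfrak a_{-}S^{[1]})S^{[1]}=H^{-1}\mathfrak a^2_{-}H. \end{align*}
   Context: Weights on $\mathbb N_0$: $w^{(a)}(k)=\frac{(b^{(a)}_1)_k\cdots(b^{(a)}_{M^{(a)}})_k}{(c_1)_k\cdots(c_N)_k}\frac{(\eta^{(a)})^k}{k!}$, $a\in\{1,2\}$, convergent series. Moment matrix (indices from 0): $\mathscr M_{n,2m}=\sum_k k^{n+m}w^{(1)}(k)$, $\mathscr M_{n,2m+1}=\sum_k k^{n+m}w^{(2)}(k)$, with all leading principal minors nonzero, so $\mathscr M=S^{-1}H\tilde S^{-\top}$ ($S,\tilde S$ lower unitriangular, $H$ diagonal), depending on $(\eta^{(1)},\eta^{(2)})$. $\Lambda$ has ones on the first superdiagonal; $S=I+\Lambda^\top S^{[1]}+(\Lambda^\top)^2S^{[2]}+\cdots$ with diagonal $S^{[k]}$; $S\Lambda S^{-1}=(\Lambda^\top)^2\gamma+\Lambda^\top\beta+\alpha+\Lambda$ with diagonal $\alpha,\beta,\gamma$. $\mathfrak a_-\operatorname{diag}(m_0,m_1,\dots)=\operatorname{diag}(m_1,m_2,\dots)$, $\mathfrak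 a_+\operatorname{diag}(m_0,m_1,\dots)=\operatorname{diag}(0,m_0,m_1,\dots)$. $\vartheta=\eta^{(1)}\partial/\partial\eta^{(1)}+\eta^{(2)}\partial/\partial\eta^{(2)}$. *)

theory Defs
  imports Complex_Main "HOL-Analysis.Derivative" "Jordan_Normal_Form.Determinant"
begin

text \<open>Infinite matrices indexed by nat are functions nat => nat => real;
  diagonal matrices are represented by their diagonal nat => real.
  Parameters are pairs eta = (eta1, eta2).\<close>

definition hgw :: "real list \<Rightarrow> real list \<Rightarrow> real \<Rightarrow> nat \<Rightarrow> real" where
  "hgw bs cs eta k =
     prod_list (map (\<lambda>b. pochhammer b k) bs) / prod_list (map (\<lambda>c. pochhammer c k) cs)
     * eta ^ k / fact k"

definition moment :: "real list \<Rightarrow> real list \<Rightarrow> real list \<Rightarrow> real \<times> real \<Rightarrow> nat \<Rightarrow> nat \<Rightarrow> real" where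
  "moment b1 b2 cs eta n j =
     (if even j then (\<Sum>k. real k ^ (n + j div 2) * hgw b1 cs (fst eta) k)
      else (\<Sum>k. real k ^ (n + j div 2) * hgw b2 cs (snd eta) k))"

definition leading_minor :: "(nat \<Rightarrow> nat \<Rightarrow> real) \<Rightarrow> nat \<Rightarrow> real" where
  "leading_minor A n = det (mat n n (\<lambda>(i, j). A i j))"

text \<open>Inverse of a lower unitriangular infinite matrix (finite recursion).\<close>
function ltinv :: "(nat \<Rightarrow> nat \<Rightarrow> real) \<Rightarrow> nat \<Rightarrow> nat \<Rightarrow> real" where
  "ltinv S n m = (if n < m then 0 else if n = m then 1
     else - (\<Sum>k\<in>{m..<n}. S n k * ltinv S k m))"
  by pat_completeness auto
termination by (relation "measure (\<lambda>(S, n, m). n)") auto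

text \<open>J = S Lambda S^{-1}; (S Lambda)_{n,j} = S_{n,j-1} for j >= 1 and 0 for j = 0.\<close>
definition jacobi :: "(nat \<Rightarrow> nat \<Rightarrow> real) \<Rightarrow> nat \<Rightarrow> nat \<Rightarrow> real" where
  "jacobi S n m = (\<Sum>j\<in>{1..n+1}. S n (j - 1) * ltinv S j m)"

definition alpha_coef :: "(nat \<Rightarrow> nat \<Rightarrow> real) \<Rightarrow> nat \<Rightarrow> real" where
  "alpha_coef S n = jacobi S n n"
definition beta_coef :: "(nat \<Rightarrow> nat \<Rightarrow> real) \<Rightarrow> nat \<Rightarrow> real" where
  "beta_coef S n = jacobi S (n + 1) n"
definition gamma_coef :: "(nat \<Rightarrow> nat \<Rightarrow> real) \<Rightarrow> nat \<Rightarrow> real" where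
  "gamma_coef S n = jacobi S (n + 2) n"

definition subdiag :: "nat \<Rightarrow> (nat \<Rightarrow> nat \<Rightarrow> real) \<Rightarrow> nat \<Rightarrow> real" where
  "subdiag k S n = S (n + k) n"

definition aminus :: "(nat \<Rightarrow> real) \<Rightarrow> nat \<Rightarrow> real" where
  "aminus d n = d (n + 1)"
definition aplus :: "(nat \<Rightarrow> real) \<Rightarrow> nat \<Rightarrow> real" where
  "aplus d n = (if n = 0 then 0 else d (n - 1))"

definition theta :: "(real \<times> real \<Rightarrow> real) \<Rightarrow> real \<times> real \<Rightarrow> real" where
  "theta f e = fst e * deriv (\<lambda>t. f (t, snd e)) (fst e) + snd e * deriv (\<lambda>t. f (fst e, t)) (snd e)"

end

theory Submission
  imports Defs
begin


declare ltinv.simps[simp del]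

lemma differentiable_prod':
  fixes f :: "'i \<Rightarrow> real \<Rightarrow> real"
  assumes "finite A" "\<And>a. a \<in> A \<Longrightarrow> f a differentiable (at x)"
  shows "(\<lambda>t. \<Prod>a\<in>A. f a t) differentiable (at x)"
  using assms
proof (induction A rule: finite_induct)
  case empty then show ?case by simp
next
  case (insert a A)
  have "(\<lambda>t. f a t * (\<Prod>a\<in>A. f a t)) differentiable (at x)"
    using insert by (intro differentiable_mult) auto
  then show ?case using insert by simp
qed

lemma det_differentiable:
  fixes F :: "real \<Rightarrow> nat \<Rightarrow> nat \<Rightarrow> real"
  assumes "\<And>i j. i < n \<Longrightarrow> j < n \<Longrightarrow> (\<lambda>t. F t i j) differentiable (at t0)"
  shows "(\<lambda>t. det (mat n n (\<lambda>(i,j). F t i j))) differentiable (at t0)"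
proof -
  have eq: "det (mat n n (\<lambda>(i,j). F t i j)) =
    (\<Sum>p\<in>{p. p permutes {0..<n}}. signof p * (\<Prod>i=0..<n. F t i (p i)))" for t
  proof -
    have "det (mat n n (\<lambda>(i,j). F t i j)) =
      (\<Sum>p\<in>{p. p permutes {0..<n}}. signof p * (\<Prod>i=0..<n. (mat n n (\<lambda>(i,j). F t i j)) $$ (i, p i)))"
      by (rule det_def') simp
    also have "\<dots> = (\<Sum>p\<in>{p. p permutes {0..<n}}. signof p * (\<Prod>i=0..<n. F t i (p i)))"
      by (intro sum.cong refl arg_cong[where f="\<lambda>x. _ * x"] prod.cong)
        (auto simp: permutes_in_image)
    finally show ?thesis .
  qed
  have fin: "finite {p. p permutes {0..<n::nat}}" by (simp add: finite_permutations)
  have "(\<lambda>t. \<Sum>p\<in>{p. p permutes {0..<n}}. signof p * (\<Prod>i=0..<n. F t i (p i))) differentiable (at t0)"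
  proof (intro differentiable_sum[OF fin] ballI differentiable_mult differentiable_const differentiable_prod')
    fix p i assume "p \<in> {p. p permutes {0..<n}}" "i \<in> {0..<n}"
    then show "(\<lambda>t. F t i (p i)) differentiable (at t0)"
      by (intro assms) (auto simp: permutes_in_image)
  qed simp
  then show ?thesis unfolding eq .
qed

lemma cramer_differentiable:
  fixes F :: "real \<Rightarrow> nat \<Rightarrow> nat \<Rightarrow> real" and r s :: "real \<Rightarrow> nat \<Rightarrow> real"
  assumes T: "open T" "t0 \<in> T"
    and detnz: "\<And>t. t \<in> T \<Longrightarrow> det (mat n n (\<lambda>(i,j). F t i j)) \<noteq> 0"
    and eqs: "\<And>t i. t \<in> T \<Longrightarrow> i < n \<Longrightarrow> (\<Sum>j<n. F t i j * s t j) = r t i"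
    and dF: "\<And>i j. i < n \<Longrightarrow> j < n \<Longrightarrow> (\<lambda>t. F t i j) differentiable (at t0)"
    and dr: "\<And>i. i < n \<Longrightarrow> (\<lambda>t. r t i) differentiable (at t0)"
    and k: "k < n"
  shows "(\<lambda>t. s t k) differentiable (at t0)"
proof -
  define G where "G t i j = (if j = k then r t i else F t i j)" for t i j
  have key: "s t k = det (mat n n (\<lambda>(i,j). G t i j)) / det (mat n n (\<lambda>(i,j). F t i j))"
    if t: "t \<in> T" for t
  proof -
    let ?A = "mat n n (\<lambda>(i,j). F t i j)"
    let ?x = "vec n (\<lambda>j. s t j)"
    have A: "?A \<in> carrier_mat n n" by simp
    have x: "?x \<in> carrier_vec n" by simp
    have Ax: "?A *\<^sub>v ?x = vec n (\<lambda>i. r t i)"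
    proof (rule eq_vecI)
      fix i assume "i < dim_vec (vec n (\<lambda>i. r t i))"
      then have i: "i < n" by simp
      have "(?A *\<^sub>v ?x) $ i = (\<Sum>j<n. F t i j * s t j)"
        using i by (simp add: mult_mat_vec_def scalar_prod_def lessThan_atLeast0)
      then show "(?A *\<^sub>v ?x) $ i = vec n (\<lambda>i. r t i) $ i" using eqs[OF t i] i by simp
    qed simp
    have rc: "replace_col ?A (vec n (\<lambda>i. r t i)) k = mat n n (\<lambda>(i,j). G t i j)"
      by (rule eq_matI) (auto simp: replace_col_def G_def)
    from cramer_lemma_mat[OF A x k] Ax rc
    have "det (mat n n (\<lambda>(i,j). G t i j)) = s t k * det ?A" using k by simp
    then show ?thesis using detnz[OF t] by simp
  qed
  have "(\<lambda>t. det (mat n n (\<lambda>(i,j). G t i j)) / det (mat n n (\<lambda>(i,j). F t i j))) differentiable (at t0)"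
    using T detnz
  proof (intro differentiable_divide det_differentiable)
    fix i j assume ij: "i < n" "j < n"
    show "(\<lambda>t. G t i j) differentiable (at t0)"
      by (cases "j = k") (simp_all add: G_def dF dr ij)
  qed (use T detnz dF in auto)
  then show ?thesis
  proof -
    assume d: "(\<lambda>t. det (mat n n (\<lambda>(i,j). G t i j)) / det (mat n n (\<lambda>(i,j). F t i j))) differentiable (at t0)"
    have "DERIV (\<lambda>t. det (mat n n (\<lambda>(i,j). G t i j)) / det (mat n n (\<lambda>(i,j). F t i j))) t0
        :> deriv (\<lambda>t. det (mat n n (\<lambda>(i,j). G t i j)) / det (mat n n (\<lambda>(i,j). F t i j))) t0"
      using d DERIV_deriv_iff_real_differentiable by blast
    then have "DERIV (\<lambda>t. s t k) t0
        :> deriv (\<lambda>t. det (mat n n (\<lambda>(i,j). G t i j)) / det (mat n n (\<lambda>(i,j). F t i j))) t0"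
      by (rule has_field_derivative_transform_within_open[OF _ T]) (simp add: key)
    then show ?thesis by (metis DERIV_deriv_iff_real_differentiable DERIV_imp_deriv)
  qed
qed




lemma ps_deriv:
  fixes a :: "nat \<Rightarrow> real"
  assumes T: "open T" "t0 \<in> T"
    and sm: "\<And>t. t \<in> T \<Longrightarrow> summable (\<lambda>k. a k * t ^ k)"
    and sm1: "summable (\<lambda>k. real k * a k * t0 ^ k)"
  shows "\<exists>D. DERIV (\<lambda>t. \<Sum>k. a k * t ^ k) t0 :> D \<and> t0 * D = (\<Sum>k. real k * a k * t0 ^ k)"
proof -
  obtain d where d: "d > 0" "ball t0 d \<subseteq> T" using T open_contains_ball by blast
  define K where "K = t0 + (if t0 \<ge> 0 then d/2 else - d/2)"
  have K1: "K \<in> T" using d by (auto simp: K_def dist_real_def subset_iff)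
  have K2: "norm t0 < norm K" using d by (auto simp: K_def)
  have D: "DERIV (\<lambda>t. \<Sum>k. a k * t ^ k) t0 :> (\<Sum>n. diffs a n * t0 ^ n)"
    by (rule termdiffs_strong[OF sm[OF K1] K2])
  have "t0 * (\<Sum>n. diffs a n * t0 ^ n) = (\<Sum>k. real k * a k * t0 ^ k)"
  proof (cases "t0 = 0")
    case True
    have "(\<lambda>k. real k * a k * t0 ^ k) = (\<lambda>k. 0)" using True by (auto simp: fun_eq_iff)
    then show ?thesis using True by simp
  next
    case False
    define g where "g k = real k * a k * t0 ^ k" for k
    have gs: "(\<lambda>n. g (Suc n)) = (\<lambda>n. t0 * (diffs a n * t0 ^ n))"
      by (auto simp: fun_eq_iff g_def diffs_def)
    have gfun: "g = (\<lambda>k. real k * a k * t0 ^ k)" by (simp add: fun_eq_iff g_def)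
    have sg0: "summable g" using sm1 by (simp add: gfun)
    have sg: "summable (\<lambda>n. g (Suc n))" using sg0 summable_Suc_iff[of g] by blast
    then have "summable (\<lambda>n. (1/t0) * (t0 * (diffs a n * t0 ^ n)))" unfolding gs
      by (rule summable_mult)
    then have sd: "summable (\<lambda>n. diffs a n * t0 ^ n)" using False by simp
    have "(\<Sum>k. g k) = (\<Sum>n. g (Suc n))" using suminf_split_head[OF sg0] by (simp add: g_def[of 0])
    also have "\<dots> = t0 * (\<Sum>n. diffs a n * t0 ^ n)" unfolding gs by (rule suminf_mult[OF sd])
    finally show ?thesis by (simp add: gfun)
  qed
  then show ?thesis using D by blast
qed

definition dp :: "bool \<Rightarrow> real \<times> real \<Rightarrow> real \<Rightarrow> real \<times> real" where
  "dp b e t = (if b then (t, snd e) else (fst e, t))"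
definition cd :: "bool \<Rightarrow> real \<times> real \<Rightarrow> real" where
  "cd b e = (if b then fst e else snd e)"

lemma dp_cd[simp]: "dp b e (cd b e) = e"
  by (cases e) (simp add: dp_def cd_def)

lemma theta_dp: "theta f e = cd True e * deriv (\<lambda>t. f (dp True e t)) (cd True e)
   + cd False e * deriv (\<lambda>t. f (dp False e t)) (cd False e)"
  by (simp add: theta_def dp_def cd_def)

lemma open_dp: "open U \<Longrightarrow> open {t. dp b e t \<in> U}"
proof -
  assume U: "open U"
  have "continuous_on UNIV (dp b e)" unfolding dp_def
    by (cases b) (auto intro!: continuous_intros)
  from open_vimage[OF U this] show ?thesis by (simp add: vimage_def)
qed

lemma hgw_eq: "real k ^ p * hgw bs cs t k =
   (real k ^ p * (prod_list (map (\<lambda>b. pochhammer b k) bs) / prod_list (map (\<lambda>c. pochhammer c k) cs)) / fact k) * t ^ k"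
  by (simp add: hgw_def)

lemma moment_deriv:
  assumes U: "open U" and e: "e \<in> U"
    and conv1: "\<And>e p. e \<in> U \<Longrightarrow> summable (\<lambda>k. real k ^ p * hgw b1 cs (fst e) k)"
    and conv2: "\<And>e p. e \<in> U \<Longrightarrow> summable (\<lambda>k. real k ^ p * hgw b2 cs (snd e) k)"
  shows "\<exists>D. DERIV (\<lambda>t. moment b1 b2 cs (dp b e t) n l) (cd b e) :> D \<and>
     cd b e * D = (if even l = b then moment b1 b2 cs e (Suc n) l else 0)"
proof -
  define T where "T = {t. dp b e t \<in> U}"
  have T: "open T" "cd b e \<in> T" using open_dp[OF U] e by (auto simp: T_def)
  define p where "p = n + l div 2"
  show ?thesis
  proof (cases "even l = b")
    case True
    define bs where "bs = (if b then b1 else b2)"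
    define a where "a k = (real k ^ p * (prod_list (map (\<lambda>b. pochhammer b k) bs) / prod_list (map (\<lambda>c. pochhammer c k) cs)) / fact k)" for k
    have mom: "moment b1 b2 cs (dp b e t) n l = (\<Sum>k. a k * t ^ k)" for t
      using True unfolding moment_def a_def hgw_eq p_def bs_def by (cases b) (auto simp: dp_def)
    have sm: "summable (\<lambda>k. a k * t ^ k)" if "t \<in> T" for t
    proof -
      have "dp b e t \<in> U" using that by (simp add: T_def)
      from conv1[OF this, of p] conv2[OF this, of p] show ?thesis
        unfolding a_def hgw_eq bs_def by (cases b) (auto simp: dp_def)
    qed
    have sm1: "summable (\<lambda>k. real k * a k * (cd b e) ^ k)"
    proof -
      from conv1[OF e, of "Suc p"] conv2[OF e, of "Suc p"] show ?thesis
        unfolding a_def hgw_eq bs_def by (cases b) (auto simp: cd_def mult_ac)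
    qed
    have mom1: "(\<Sum>k. real k * a k * (cd b e) ^ k) = moment b1 b2 cs e (Suc n) l"
      using True unfolding moment_def a_def hgw_eq p_def bs_def by (cases b) (auto simp: cd_def mult_ac)
    from ps_deriv[OF T sm sm1] mom mom1 True show ?thesis by simp
  next
    case False
    have "(\<lambda>t. moment b1 b2 cs (dp b e t) n l) = (\<lambda>t. moment b1 b2 cs e n l)"
      using False by (cases b) (auto simp: dp_def moment_def fun_eq_iff)
    then show ?thesis using False by (auto intro: DERIV_const)
  qed
qed




lemma uniq_det:
  fixes M :: "nat \<Rightarrow> nat \<Rightarrow> real" and v :: "nat \<Rightarrow> real"
  assumes d: "det (mat N N (\<lambda>(i,j). M i j)) \<noteq> 0"
    and v0: "\<And>k. N \<le> k \<Longrightarrow> v k = 0"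
    and orth: "\<And>l. l < N \<Longrightarrow> (\<Sum>k<N. v k * M k l) = 0"
  shows "v k = 0"
proof (cases "k < N")
  case False then show ?thesis using v0 by simp
next
  case True
  let ?B = "mat N N (\<lambda>(i,j). M i j)"
  let ?A = "mat N N (\<lambda>(l,k). M k l)"
  have At: "?A = transpose_mat ?B" by (rule eq_matI) auto
  have "det ?A = det ?B" unfolding At using det_transpose[of ?B N] by simp
  with d have dA: "det ?A \<noteq> 0" by simp
  have Av: "?A *\<^sub>v vec N v = 0\<^sub>v N"
  proof (rule eq_vecI)
    fix l assume "l < dim_vec (0\<^sub>v N :: real vec)"
    then have l: "l < N" by simp
    have "(?A *\<^sub>v vec N v) $ l = (\<Sum>k<N. M k l * v k)"
      using l by (simp add: mult_mat_vec_def scalar_prod_def lessThan_atLeast0)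
    also have "\<dots> = 0" using orth[OF l] by (simp add: mult.commute)
    finally show "(?A *\<^sub>v vec N v) $ l = 0\<^sub>v N $ l" using l by simp
  qed simp
  have vc: "vec N v \<in> carrier_vec N" by simp
  have cA: "?A \<in> carrier_mat N N" by simp
  have "vec N v = 0\<^sub>v N"
    using vc det_0_iff_vec_prod_zero[OF cA] dA Av by blast
  then have "vec N v $ k = 0\<^sub>v N $ k" by simp
  then show ?thesis using True by simp
qed

locale alg =
  fixes S :: "nat \<Rightarrow> nat \<Rightarrow> real" and M :: "nat \<Rightarrow> nat \<Rightarrow> real" and H :: "nat \<Rightarrow> real"
    and TS :: "nat \<Rightarrow> nat \<Rightarrow> real" and TH :: "nat \<Rightarrow> real"
  assumes unit: "\<And>n. S n n = 1"
    and lower: "\<And>n m. n < m \<Longrightarrow> S n m = 0"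
    and O: "\<And>n l. l \<le> n \<Longrightarrow> (\<Sum>k\<le>n. S n k * M k l) = (if l = n then H n else 0)"
    and D: "\<And>n l. l \<le> n \<Longrightarrow> (\<Sum>k\<le>n. TS n k * M k l) + (\<Sum>k\<le>n. S n k * M (Suc k) l)
              = (if l = n then TH n else 0)"
    and TS0: "\<And>n k. n \<le> k \<Longrightarrow> TS n k = 0"
    and U: "\<And>N v k. (\<And>k. N \<le> k \<Longrightarrow> v k = 0) \<Longrightarrow> (\<And>l. l < N \<Longrightarrow> (\<Sum>k<N. v k * M k l) = 0) \<Longrightarrow> v k = 0"
    and shift: "\<And>k l. M (Suc k) l = M k (l + 2)"
begin

lemma ext_sum:
  assumes "\<And>k. N \<le> k \<Longrightarrow> v k = 0" "N \<le> B"
  shows "(\<Sum>k<B. v k * M k l) = (\<Sum>k<N. v k * M k l)"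
  using assms by (intro sum.mono_neutral_right) auto

lemma SO: "l \<le> m \<Longrightarrow> m < B \<Longrightarrow> (\<Sum>k<B. S m k * M k l) = (if l = m then H m else 0)"
proof -
  assume a: "l \<le> m" "m < B"
  have "(\<Sum>k<B. S m k * M k l) = (\<Sum>k<Suc m. S m k * M k l)"
    using a by (intro ext_sum) (auto simp: lower)
  also have "\<dots> = (if l = m then H m else 0)" using O[OF a(1)] by (simp add: lessThan_Suc_atMost)
  finally show ?thesis .
qed

lemma SD: "l \<le> m \<Longrightarrow> m < B \<Longrightarrow>
  (\<Sum>k<B. TS m k * M k l) + (\<Sum>k<B. S m k * M (Suc k) l) = (if l = m then TH m else 0)"
proof -
  assume a: "l \<le> m" "m < B"
  have "(\<Sum>k<B. TS m k * M k l) = (\<Sum>k\<le>m. TS m k * M k l)"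
    unfolding lessThan_Suc_atMost[symmetric] using a by (intro ext_sum) (auto simp: TS0)
  moreover have "(\<Sum>k<B. S m k * M (Suc k) l) = (\<Sum>k\<le>m. S m k * M (Suc k) l)"
    using a by (intro sum.mono_neutral_right) (auto simp: lower)
  ultimately show ?thesis using D[OF a(1)] by simp
qed

definition zS :: "nat \<Rightarrow> nat \<Rightarrow> real" where "zS m k = (if k = 0 then 0 else S m (k - 1))"

lemma SZ: "m < B \<Longrightarrow> (\<Sum>k<Suc B. zS m k * M k l) = (\<Sum>k<B. S m k * M (Suc k) l)"
  by (subst sum.lessThan_Suc_shift) (simp add: zS_def)

lemma H_nz: "H n \<noteq> 0"
proof
  assume h: "H n = 0"
  have "S n n = 0"
  proof (rule U[of "Suc n" "S n" n])
    fix k assume "Suc n \<le> k" then show "S n k = 0" by (simp add: lower)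
  next
    fix l assume "l < Suc n"
    then show "(\<Sum>k<Suc n. S n k * M k l) = 0" using SO[of l n "Suc n"] h by auto
  qed
  then show False by (simp add: unit)
qed

definition alpha' :: "nat \<Rightarrow> real" where
  "alpha' n = (if n = 0 then 0 else S n (n - 1)) - S (Suc n) n"

lemma TS_TH: "TS n k = S (Suc n) k + alpha' n * S n k - zS n k \<and> TH n = alpha' n * H n"
proof -
  define w where "w k = TS n k + zS n k - S (Suc n) k - alpha' n * S n k" for k
  have w0: "w k = 0" if "n \<le> k" for k
  proof -
    have "k = n \<or> k = Suc n \<or> k > Suc n" using that by arith
    then show ?thesis
      by (elim disjE) (auto simp: w_def TS0 zS_def unit lower alpha'_def)
  qed
  have Lw: "(\<Sum>k<Suc (Suc (Suc n)). w k * M k l) =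
     ((\<Sum>k<Suc (Suc n). TS n k * M k l) + (\<Sum>k<Suc (Suc n). S n k * M (Suc k) l))
     - (\<Sum>k<Suc (Suc n). S (Suc n) k * M k l) - alpha' n * (\<Sum>k<Suc (Suc n). S n k * M k l)" for l
  proof -
    have "(\<Sum>k<Suc (Suc (Suc n)). w k * M k l) =
      (\<Sum>k<Suc (Suc (Suc n)). TS n k * M k l) + (\<Sum>k<Suc (Suc (Suc n)). zS n k * M k l)
      - (\<Sum>k<Suc (Suc (Suc n)). S (Suc n) k * M k l) - alpha' n * (\<Sum>k<Suc (Suc (Suc n)). S n k * M k l)"
      by (simp add: w_def algebra_simps sum.distrib sum_subtractf sum_distrib_left)
    also have "(\<Sum>k<Suc (Suc (Suc n)). TS n k * M k l) = (\<Sum>k<Suc (Suc n). TS n k * M k l)"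
      by (simp add: TS0)
    also have "(\<Sum>k<Suc (Suc (Suc n)). zS n k * M k l) = (\<Sum>k<Suc (Suc n). S n k * M (Suc k) l)"
      by (rule SZ) simp
    also have "(\<Sum>k<Suc (Suc (Suc n)). S (Suc n) k * M k l) = (\<Sum>k<Suc (Suc n). S (Suc n) k * M k l)"
      by (simp add: lower)
    also have "(\<Sum>k<Suc (Suc (Suc n)). S n k * M k l) = (\<Sum>k<Suc (Suc n). S n k * M k l)"
      by (simp add: lower)
    finally show ?thesis by simp
  qed
  have wz: "w k = 0" for k
  proof (rule U[of n w k])
    fix k assume "n \<le> k" then show "w k = 0" by (rule w0)
  next
    fix l assume l: "l < n"
    have "(\<Sum>k<n. w k * M k l) = (\<Sum>k<Suc (Suc (Suc n)). w k * M k l)"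
      by (rule ext_sum[symmetric]) (auto intro: w0)
    also have "\<dots> = 0" unfolding Lw using l SD[of l n "Suc (Suc n)"] SO[of l "Suc n" "Suc (Suc n)"]
        SO[of l n "Suc (Suc n)"] by simp
    finally show "(\<Sum>k<n. w k * M k l) = 0" .
  qed
  have "0 = (\<Sum>k<Suc (Suc (Suc n)). w k * M k n)" by (simp add: wz)
  also have "\<dots> = TH n - alpha' n * H n" unfolding Lw
    using SD[of n n "Suc (Suc n)"] SO[of n "Suc n" "Suc (Suc n)"] SO[of n n "Suc (Suc n)"] by simp
  finally have "TH n = alpha' n * H n" by simp
  moreover have "TS n k = S (Suc n) k + alpha' n * S n k - zS n k"
    using wz[of k] by (simp add: w_def)
  ultimately show ?thesis by simp
qed

end



context alg begin

definition aa :: "nat \<Rightarrow> real" where "aa n = S (Suc (Suc n)) (Suc n) - S (Suc (Suc (Suc n))) (Suc (Suc n))"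
definition bb :: "nat \<Rightarrow> real" where "bb n = S (Suc (Suc n)) n - S (Suc (Suc (Suc n))) (Suc n) - aa n * S (Suc (Suc n)) (Suc n)"
definition cc :: "nat \<Rightarrow> real" where "cc n = (if n = 0 then 0 else S (Suc (Suc n)) (n - 1))
   - S (Suc (Suc (Suc n))) n - aa n * S (Suc (Suc n)) n - bb n * S (Suc n) n"

lemma gamma_rec: "cc n = H (Suc (Suc n)) / H n"
proof -
  define B where "B = Suc (Suc (Suc (Suc (Suc n))))"
  define v where "v k = zS (Suc (Suc n)) k - S (Suc (Suc (Suc n))) k - aa n * S (Suc (Suc n)) k
     - bb n * S (Suc n) k - cc n * S n k" for k
  have v0: "v k = 0" if "n \<le> k" for k
  proof -
    have "k = n \<or> k = Suc n \<or> k = Suc (Suc n) \<or> k = Suc (Suc (Suc n)) \<or> k > Suc (Suc (Suc n))"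
      using that by arith
    then show ?thesis
      by (elim disjE) (auto simp: v_def zS_def unit lower aa_def bb_def cc_def)
  qed
  have Lv: "(\<Sum>k<B. v k * M k l) = (\<Sum>k<B. S (Suc (Suc n)) k * M k (l + 2))
     - (\<Sum>k<B. S (Suc (Suc (Suc n))) k * M k l) - aa n * (\<Sum>k<B. S (Suc (Suc n)) k * M k l)
     - bb n * (\<Sum>k<B. S (Suc n) k * M k l) - cc n * (\<Sum>k<B. S n k * M k l)" for l
  proof -
    have "(\<Sum>k<B. v k * M k l) = (\<Sum>k<B. zS (Suc (Suc n)) k * M k l)
     - (\<Sum>k<B. S (Suc (Suc (Suc n))) k * M k l) - aa n * (\<Sum>k<B. S (Suc (Suc n)) k * M k l)
     - bb n * (\<Sum>k<B. S (Suc n) k * M k l) - cc n * (\<Sum>k<B. S n k * M k l)"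
      by (simp add: v_def algebra_simps sum.distrib sum_subtractf sum_distrib_left)
    also have "(\<Sum>k<B. zS (Suc (Suc n)) k * M k l) = (\<Sum>k<Suc (Suc (Suc (Suc n))). S (Suc (Suc n)) k * M (Suc k) l)"
      unfolding B_def by (rule SZ) simp
    also have "\<dots> = (\<Sum>k<Suc (Suc (Suc (Suc n))). S (Suc (Suc n)) k * M k (l + 2))"
      by (simp add: shift)
    also have "\<dots> = (\<Sum>k<B. S (Suc (Suc n)) k * M k (l + 2))"
      unfolding B_def by (simp add: lower)
    finally show ?thesis .
  qed
  have vz: "v k = 0" for k
  proof (rule U[of n v k])
    fix k assume "n \<le> k" then show "v k = 0" by (rule v0)
  next
    fix l assume l: "l < n"
    have "(\<Sum>k<n. v k * M k l) = (\<Sum>k<B. v k * M k l)"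
      by (rule ext_sum[symmetric]) (auto intro: v0 simp: B_def)
    also have "\<dots> = 0" unfolding Lv using l
        SO[of "l+2" "Suc (Suc n)" B] SO[of l "Suc (Suc (Suc n))" B] SO[of l "Suc (Suc n)" B]
        SO[of l "Suc n" B] SO[of l n B] by (simp add: B_def)
    finally show "(\<Sum>k<n. v k * M k l) = 0" .
  qed
  have "0 = (\<Sum>k<B. v k * M k n)" by (simp add: vz)
  also have "\<dots> = H (Suc (Suc n)) - cc n * H n" unfolding Lv using
        SO[of "n+2" "Suc (Suc n)" B] SO[of n "Suc (Suc (Suc n))" B] SO[of n "Suc (Suc n)" B]
        SO[of n "Suc n" B] SO[of n n B] by (simp add: B_def)
  finally show ?thesis using H_nz[of n] by (simp add: field_simps)
qed

end



lemma lt_less: "j < m \<Longrightarrow> ltinv S j m = 0"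
  by (subst ltinv.simps) simp
lemma lt_eq: "ltinv S m m = 1"
  by (subst ltinv.simps) simp
lemma lt_step: "m < j \<Longrightarrow> ltinv S j m = - (\<Sum>k\<in>{m..<j}. S j k * ltinv S k m)"
  by (subst ltinv.simps) simp

lemma jac_gen: "m \<le> Suc n \<Longrightarrow> jacobi S n m = (\<Sum>j\<in>{m..Suc n}. (if j = 0 then 0 else S n (j - 1) * ltinv S j m))"
proof -
  assume m: "m \<le> Suc n"
  let ?f = "\<lambda>j. if j = 0 then 0 else S n (j - 1) * ltinv S j m"
  have "jacobi S n m = (\<Sum>j\<in>{1..Suc n}. ?f j)"
    unfolding jacobi_def by (intro sum.cong) auto
  also have "\<dots> = (\<Sum>j\<in>{0..Suc n}. ?f j)"
    by (intro sum.mono_neutral_left) auto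
  also have "\<dots> = (\<Sum>j\<in>{m..Suc n}. ?f j)"
    by (intro sum.mono_neutral_right) (auto simp: lt_less)
  finally show ?thesis .
qed

context alg begin

lemma lt1: "ltinv S (Suc m) m = - S (Suc m) m"
  by (simp add: lt_step lt_eq)
lemma lt2: "ltinv S (Suc (Suc m)) m = - (S (Suc (Suc m)) m + S (Suc (Suc m)) (Suc m) * ltinv S (Suc m) m)"
  by (simp add: lt_step[of m "Suc (Suc m)"] lt_eq)
lemma lt3: "ltinv S (Suc (Suc (Suc m))) m = - (S (Suc (Suc (Suc m))) m
   + S (Suc (Suc (Suc m))) (Suc m) * ltinv S (Suc m) m + S (Suc (Suc (Suc m))) (Suc (Suc m)) * ltinv S (Suc (Suc m)) m)"
  by (simp add: lt_step[of m "Suc (Suc (Suc m))"] lt_eq)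

lemma alpha_val: "alpha_coef S n = alpha' n"
  unfolding alpha_coef_def
  by (simp add: jac_gen atLeastAtMostSuc_conv lt_eq lt1 unit alpha'_def)

lemma beta_val: "beta_coef S n = (if n = 0 then 0 else S (Suc n) (n - 1)) + S (Suc n) n * ltinv S (Suc n) n
     + ltinv S (Suc (Suc n)) n"
  unfolding beta_coef_def
  by (simp add: jac_gen atLeastAtMostSuc_conv lt_eq unit)

lemma gamma_val: "gamma_coef S n = (if n = 0 then 0 else S (Suc (Suc n)) (n - 1)) + S (Suc (Suc n)) n * ltinv S (Suc n) n
     + S (Suc (Suc n)) (Suc n) * ltinv S (Suc (Suc n)) n + ltinv S (Suc (Suc (Suc n))) n"
  unfolding gamma_coef_def
  by (simp add: jac_gen atLeastAtMostSuc_conv lt_eq unit)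

lemma alg_main:
  "alpha_coef S n = TH n / H n
   \<and> TH n / H n = aplus (subdiag 1 S) n - subdiag 1 S n
   \<and> beta_coef S n = - TS (n + 1) n
   \<and> - TS (n + 1) n = aplus (subdiag 2 S) n - subdiag 2 S n - subdiag 1 S n * aminus (\<lambda>i. TH i / H i) n
   \<and> gamma_coef S n = - TS (n + 2) n + TS (n + 2) (n + 1) * subdiag 1 S n
   \<and> - TS (n + 2) n + TS (n + 2) (n + 1) * subdiag 1 S n = H (n + 2) / H n"
proof -
  have th: "TH m / H m = alpha' m" for m using TS_TH[of m 0] H_nz[of m] by simp
  have ts: "TS m k = S (Suc m) k + alpha' m * S m k - zS m k" for m k using TS_TH by simp
  have g: "H (n + 2) / H n = cc n" using gamma_rec[of n] by simp
  show ?thesis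
    unfolding th g alpha_val beta_val gamma_val
    by (simp add: ts aplus_def aminus_def subdiag_def alpha'_def zS_def lt1 lt2 lt3 unit lower
        cc_def aa_def bb_def algebra_simps numeral_2_eq_2)
qed

end



locale hyp =
  fixes b1 b2 cs :: "real list"
    and U :: "(real \<times> real) set"
    and S St :: "real \<times> real \<Rightarrow> nat \<Rightarrow> nat \<Rightarrow> real"
    and H :: "real \<times> real \<Rightarrow> nat \<Rightarrow> real"
  assumes U_open: "open U"
    and conv1: "\<And>e p. e \<in> U \<Longrightarrow> summable (\<lambda>k. real k ^ p * hgw b1 cs (fst e) k)"
    and conv2: "\<And>e p. e \<in> U \<Longrightarrow> summable (\<lambda>k. real k ^ p * hgw b2 cs (snd e) k)"
    and minors: "\<And>e n. e \<in> U \<Longrightarrow> n \<ge> 1 \<Longrightarrow> leading_minor (moment b1 b2 cs e) n \<noteq> 0"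
    and S_unit: "\<And>e n. e \<in> U \<Longrightarrow> S e n n = 1"
    and S_lower: "\<And>e n m. e \<in> U \<Longrightarrow> n < m \<Longrightarrow> S e n m = 0"
    and St_unit: "\<And>e n. e \<in> U \<Longrightarrow> St e n n = 1"
    and St_lower: "\<And>e n m. e \<in> U \<Longrightarrow> n < m \<Longrightarrow> St e n m = 0"
    and gauss_borel: "\<And>e n m. e \<in> U \<Longrightarrow>
        (\<Sum>k\<le>n. \<Sum>l\<le>m. S e n k * moment b1 b2 cs e k l * St e m l)
          = (if n = m then H e n else 0)"
begin

abbreviation "M \<equiv> moment b1 b2 cs"

lemma O_at:
  assumes x: "x \<in> U" and l: "l \<le> n"
  shows "(\<Sum>k\<le>n. S x n k * M x k l) = (if l = n then H x n else 0)"
proof -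
  define P where "P l = (\<Sum>k\<le>n. S x n k * M x k l)" for l
  have gb: "(\<Sum>l\<le>m. P l * St x m l) = (if n = m then H x n else 0)" for m
  proof -
    have "(\<Sum>l\<le>m. P l * St x m l) = (\<Sum>k\<le>n. \<Sum>l\<le>m. S x n k * M x k l * St x m l)"
      unfolding P_def sum_distrib_right by (rule sum.swap)
    then show ?thesis using gauss_borel[OF x] by simp
  qed
  have "m \<le> n \<longrightarrow> P m = (if m = n then H x n else 0)" for m
  proof (induction m rule: less_induct)
    case (less m)
    show ?case
    proof
      assume mn: "m \<le> n"
      have z: "P j * St x m j = 0" if "j \<in> {..<m}" for j
        using less.IH[of j] that mn by auto
      have "(\<Sum>l\<le>m. P l * St x m l) = P m * St x m m + (\<Sum>l<m. P l * St x m l)"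
        by (simp add: lessThan_Suc_atMost[symmetric] del: lessThan_Suc_atMost)
      also have "(\<Sum>l<m. P l * St x m l) = 0" by (rule sum.neutral) (use z in blast)
      also have "P m * St x m m + 0 = P m" using St_unit[OF x] by simp
      finally show "P m = (if m = n then H x n else 0)" using gb[of m] by auto
    qed
  qed
  then show ?thesis using l by (simp add: P_def)
qed

lemma U_at:
  assumes x: "x \<in> U" and v0: "\<And>k. N \<le> k \<Longrightarrow> v k = 0"
    and orth: "\<And>l. l < N \<Longrightarrow> (\<Sum>k<N. v k * M x k l) = 0"
  shows "v k = 0"
proof (cases "N = 0")
  case True then show ?thesis using v0 by simp
next
  case False
  then have "det (mat N N (\<lambda>(i,j). M x i j)) \<noteq> 0"
    using minors[OF x, of N] by (simp add: leading_minor_def)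
  from uniq_det[OF this v0 orth] show ?thesis .
qed

lemma M_shift: "M x (Suc k) l = M x k (l + 2)"
  by (simp add: moment_def)

lemma M_deriv: "x \<in> U \<Longrightarrow> \<exists>D. DERIV (\<lambda>t. M (dp b x t) k l) (cd b x) :> D \<and>
     cd b x * D = (if even l = b then M x (Suc k) l else 0)"
  by (rule moment_deriv[OF U_open _ conv1 conv2])

lemma M_diff: "x \<in> U \<Longrightarrow> (\<lambda>t. M (dp b x t) k l) differentiable (at (cd b x))"
  using M_deriv[of x b k l] by (metis DERIV_deriv_iff_real_differentiable DERIV_imp_deriv)

lemma T_open: "open {t. dp b x t \<in> U}" by (rule open_dp[OF U_open])

lemma const_deriv:
  assumes x: "x \<in> U" and c: "\<And>t. dp b x t \<in> U \<Longrightarrow> f t = c"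
  shows "DERIV f (cd b x) :> 0"
  proof (rule has_field_derivative_transform_within_open[OF DERIV_const T_open])
  show "cd b x \<in> {t. dp b x t \<in> U}" using x by simp
  fix t assume "t \<in> {t. dp b x t \<in> U}"
  then show "c = f t" using c by simp
qed

lemma S_diff:
  assumes x: "x \<in> U"
  shows "(\<lambda>t. S (dp b x t) n k) differentiable (at (cd b x))"
proof (cases "k < n")
  case False
  have "DERIV (\<lambda>t. S (dp b x t) n k) (cd b x) :> 0"
    by (rule const_deriv[OF x, of _ _ "if n = k then 1 else 0"]) (use False S_unit S_lower in auto)
  then show ?thesis by (metis DERIV_deriv_iff_real_differentiable DERIV_imp_deriv)
next
  case True
  define T where "T = {t. dp b x t \<in> U}"
  show ?thesis
  proof (rule cramer_differentiable[of T "cd b x" n "\<lambda>t i j. M (dp b x t) j i"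
        "\<lambda>t j. S (dp b x t) n j" "\<lambda>t i. - M (dp b x t) n i"])
    show "open T" using T_open by (simp add: T_def)
    show "cd b x \<in> T" using x by (simp add: T_def)
  next
    fix t assume t: "t \<in> T"
    then have tU: "dp b x t \<in> U" by (simp add: T_def)
    have eq: "mat n n (\<lambda>(i,j). M (dp b x t) j i) = transpose_mat (mat n n (\<lambda>(i,j). M (dp b x t) i j))"
      by (rule eq_matI) auto
    have "det (mat n n (\<lambda>(i,j). M (dp b x t) j i)) = det (mat n n (\<lambda>(i,j). M (dp b x t) i j))"
      unfolding eq using det_transpose[of "mat n n (\<lambda>(i,j). M (dp b x t) i j)" n] by simp
    also have "\<dots> \<noteq> 0" using minors[OF tU, of n] True by (simp add: leading_minor_def)
    finally show "det (mat n n (\<lambda>(i,j). M (dp b x t) j i)) \<noteq> 0" .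
  next
    fix t i assume t: "t \<in> T" and i: "i < n"
    then have tU: "dp b x t \<in> U" by (simp add: T_def)
    have "(\<Sum>k\<le>n. S (dp b x t) n k * M (dp b x t) k i) = 0" using O_at[OF tU, of i n] i by simp
    then have "(\<Sum>k<n. S (dp b x t) n k * M (dp b x t) k i) + M (dp b x t) n i = 0"
      using S_unit[OF tU] by (simp add: lessThan_Suc_atMost[symmetric] del: lessThan_Suc_atMost)
    then show "(\<Sum>j<n. M (dp b x t) j i * S (dp b x t) n j) = - M (dp b x t) n i"
      by (simp add: mult.commute)
  next
    fix i j show "(\<lambda>t. M (dp b x t) j i) differentiable (at (cd b x))" by (rule M_diff[OF x])
  next
    fix i show "(\<lambda>t. - M (dp b x t) n i) differentiable (at (cd b x))"
      by (intro differentiable_minus M_diff[OF x])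
  next
    show "k < n" by (rule True)
  qed
qed

end



context hyp begin

lemma S_DERIV: "x \<in> U \<Longrightarrow> DERIV (\<lambda>t. S (dp b x t) n k) (cd b x) :> deriv (\<lambda>t. S (dp b x t) n k) (cd b x)"
  unfolding DERIV_deriv_iff_real_differentiable by (rule S_diff)
lemma M_DERIV: "x \<in> U \<Longrightarrow> DERIV (\<lambda>t. M (dp b x t) k l) (cd b x) :> deriv (\<lambda>t. M (dp b x t) k l) (cd b x)"
  unfolding DERIV_deriv_iff_real_differentiable by (rule M_diff)

lemma D_dir:
  assumes x: "x \<in> U" and l: "l \<le> n"
  shows "(\<Sum>k\<le>n. deriv (\<lambda>t. S (dp b x t) n k) (cd b x) * M x k l
            + deriv (\<lambda>t. M (dp b x t) k l) (cd b x) * S x n k)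
         = (if l = n then deriv (\<lambda>t. H (dp b x t) n) (cd b x) else 0)"
proof -
  let ?f = "\<lambda>t. \<Sum>k\<le>n. S (dp b x t) n k * M (dp b x t) k l"
  let ?D = "\<Sum>k\<le>n. deriv (\<lambda>t. S (dp b x t) n k) (cd b x) * M x k l
            + deriv (\<lambda>t. M (dp b x t) k l) (cd b x) * S x n k"
  have "DERIV ?f (cd b x) :> (\<Sum>k\<le>n. deriv (\<lambda>t. S (dp b x t) n k) (cd b x) * M (dp b x (cd b x)) k l
            + deriv (\<lambda>t. M (dp b x t) k l) (cd b x) * S (dp b x (cd b x)) n k)"
    by (intro DERIV_sum DERIV_mult S_DERIV[OF x] M_DERIV[OF x])
  then have f: "DERIV ?f (cd b x) :> ?D" by simp
  show ?thesis
  proof (cases "l = n")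
    case True
    have "DERIV (\<lambda>t. H (dp b x t) n) (cd b x) :> ?D"
    proof (rule has_field_derivative_transform_within_open[OF f T_open])
      show "cd b x \<in> {t. dp b x t \<in> U}" using x by simp
      fix t assume "t \<in> {t. dp b x t \<in> U}"
      then show "?f t = H (dp b x t) n" using O_at[of "dp b x t" l n] True by simp
    qed
    then have "deriv (\<lambda>t. H (dp b x t) n) (cd b x) = ?D" by (rule DERIV_imp_deriv)
    then show ?thesis using True by simp
  next
    case False
    have "DERIV ?f (cd b x) :> 0"
    proof (rule const_deriv[OF x])
      fix t assume t: "dp b x t \<in> U"
      show "?f t = 0" using O_at[OF t l] False by simp
    qed
    then show ?thesis using DERIV_unique[OF f] False by simp
  qed
qed

lemma M_theta: "x \<in> U \<Longrightarrow> cd True x * deriv (\<lambda>t. M (dp True x t) k l) (cd True x)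
   + cd False x * deriv (\<lambda>t. M (dp False x t) k l) (cd False x) = M x (Suc k) l"
proof -
  assume x: "x \<in> U"
  obtain D1 where D1: "DERIV (\<lambda>t. M (dp True x t) k l) (cd True x) :> D1"
     "cd True x * D1 = (if even l = True then M x (Suc k) l else 0)" using M_deriv[OF x, of True k l] by (elim exE conjE)
  obtain D2 where D2: "DERIV (\<lambda>t. M (dp False x t) k l) (cd False x) :> D2"
     "cd False x * D2 = (if even l = False then M x (Suc k) l else 0)" using M_deriv[OF x, of False k l] by (elim exE conjE)
  show ?thesis unfolding DERIV_imp_deriv[OF D1(1)] DERIV_imp_deriv[OF D2(1)] D1(2) D2(2)
    by (cases "even l") simp_all
qed

lemma D_at:
  assumes x: "x \<in> U" and l: "l \<le> n"
  shows "(\<Sum>k\<le>n. theta (\<lambda>y. S y n k) x * M x k l) + (\<Sum>k\<le>n. S x n k * M x (Suc k) l)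
     = (if l = n then theta (\<lambda>y. H y n) x else 0)"
proof -
  define dS where "dS b k = deriv (\<lambda>t. S (dp b x t) n k) (cd b x)" for b k
  define dM where "dM b k = deriv (\<lambda>t. M (dp b x t) k l) (cd b x)" for b k
  define dH where "dH b = deriv (\<lambda>t. H (dp b x t) n) (cd b x)" for b
  have e: "(\<Sum>k\<le>n. dS b k * M x k l + dM b k * S x n k) = (if l = n then dH b else 0)" for b
    unfolding dS_def dM_def dH_def by (rule D_dir[OF x l])
  have mt: "cd True x * dM True k + cd False x * dM False k = M x (Suc k) l" for k
    unfolding dM_def by (rule M_theta[OF x])
  have "(\<Sum>k\<le>n. theta (\<lambda>y. S y n k) x * M x k l) + (\<Sum>k\<le>n. S x n k * M x (Suc k) l)
      = (\<Sum>k\<le>n. theta (\<lambda>y. S y n k) x * M x k l + S x n k * M x (Suc k) l)"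
    by (simp add: sum.distrib)
  also have "\<dots> = (\<Sum>k\<le>n. cd True x * (dS True k * M x k l + dM True k * S x n k)
                 + cd False x * (dS False k * M x k l + dM False k * S x n k))"
  proof (rule sum.cong[OF refl])
    fix k
    have th: "theta (\<lambda>y. S y n k) x = cd True x * dS True k + cd False x * dS False k"
      unfolding theta_dp dS_def ..
    have r: "cd True x * (dS True k * M x k l + dM True k * S x n k)
       + cd False x * (dS False k * M x k l + dM False k * S x n k)
       = (cd True x * dS True k + cd False x * dS False k) * M x k l
         + S x n k * (cd True x * dM True k + cd False x * dM False k)"
      by (simp add: algebra_simps)
    then show "theta (\<lambda>y. S y n k) x * M x k l + S x n k * M x (Suc k) l =
      cd True x * (dS True k * M x k l + dM True k * S x n k)
       + cd False x * (dS False k * M x k l + dM False k * S x n k)"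
      unfolding r th mt[of k] ..
  qed
  also have "\<dots> = cd True x * (\<Sum>k\<le>n. dS True k * M x k l + dM True k * S x n k)
                 + cd False x * (\<Sum>k\<le>n. dS False k * M x k l + dM False k * S x n k)"
    by (simp add: sum.distrib sum_distrib_left distrib_left)
  also have "\<dots> = (if l = n then theta (\<lambda>y. H y n) x else 0)"
    unfolding e theta_dp dH_def by simp
  finally show ?thesis .
qed

lemma TS0_at:
  assumes x: "x \<in> U" and nk: "n \<le> k"
  shows "theta (\<lambda>y. S y n k) x = 0"
proof -
  have "deriv (\<lambda>t. S (dp b x t) n k) (cd b x) = 0" for b
  proof (rule DERIV_imp_deriv)
    show "DERIV (\<lambda>t. S (dp b x t) n k) (cd b x) :> 0"
  proof (rule const_deriv[OF x, of _ _ "if n = k then 1 else 0"])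
    fix t assume t: "dp b x t \<in> U"
    show "S (dp b x t) n k = (if n = k then 1 else 0)" using S_unit[OF t] S_lower[OF t] nk by simp
  qed
  qed
  then show ?thesis unfolding theta_dp by simp
qed

end


theorem mainTheorem17:
  fixes b1 b2 cs :: "real list"
    and U :: "(real \<times> real) set"
    and S St :: "real \<times> real \<Rightarrow> nat \<Rightarrow> nat \<Rightarrow> real"
    and H :: "real \<times> real \<Rightarrow> nat \<Rightarrow> real"
  assumes U_open: "open U"
    and c_ok: "\<And>c. c \<in> set cs \<Longrightarrow> c \<notin> {x. \<exists>k::nat. x = - real k}"
    and conv1: "\<And>e p. e \<in> U \<Longrightarrow> summable (\<lambda>k. real k ^ p * hgw b1 cs (fst e) k)"
    and conv2: "\<And>e p. e \<in> U \<Longrightarrow> summable (\<lambda>k. real k ^ p * hgw b2 cs (snd e) k)"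
    and minors: "\<And>e n. e \<in> U \<Longrightarrow> n \<ge> 1 \<Longrightarrow> leading_minor (moment b1 b2 cs e) n \<noteq> 0"
    and S_unit: "\<And>e n. e \<in> U \<Longrightarrow> S e n n = 1"
    and S_lower: "\<And>e n m. e \<in> U \<Longrightarrow> n < m \<Longrightarrow> S e n m = 0"
    and St_unit: "\<And>e n. e \<in> U \<Longrightarrow> St e n n = 1"
    and St_lower: "\<And>e n m. e \<in> U \<Longrightarrow> n < m \<Longrightarrow> St e n m = 0"
    and gauss_borel: "\<And>e n m. e \<in> U \<Longrightarrow>
        (\<Sum>k\<le>n. \<Sum>l\<le>m. S e n k * moment b1 b2 cs e k l * St e m l)
          = (if n = m then H e n else 0)"
    and e_in: "e \<in> U"
  shows
    "alpha_coef (S e) n = theta (\<lambda>x. H x n) e / H e n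
     \<and> theta (\<lambda>x. H x n) e / H e n = aplus (subdiag 1 (S e)) n - subdiag 1 (S e) n
     \<and> beta_coef (S e) n = - theta (\<lambda>x. subdiag 1 (S x) n) e
     \<and> - theta (\<lambda>x. subdiag 1 (S x) n) e
         = aplus (subdiag 2 (S e)) n - subdiag 2 (S e) n
           - subdiag 1 (S e) n * aminus (\<lambda>i. theta (\<lambda>x. H x i) e / H e i) n
     \<and> gamma_coef (S e) n
         = - theta (\<lambda>x. subdiag 2 (S x) n) e
           + theta (\<lambda>x. aminus (subdiag 1 (S x)) n) e * subdiag 1 (S e) n
     \<and> - theta (\<lambda>x. subdiag 2 (S x) n) e
           + theta (\<lambda>x. aminus (subdiag 1 (S x)) n) e * subdiag 1 (S e) n
         = H e (n + 2) / H e n"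
proof -
  interpret hyp b1 b2 cs U S St H
    by unfold_locales (fact U_open conv1 conv2 minors S_unit S_lower St_unit St_lower gauss_borel)+
  interpret A: alg "S e" "moment b1 b2 cs e" "H e" "\<lambda>n k. theta (\<lambda>x. S x n k) e" "\<lambda>n. theta (\<lambda>x. H x n) e"
  proof unfold_locales
    show "\<And>n. S e n n = 1" using S_unit[OF e_in] .
    show "\<And>n m. n < m \<Longrightarrow> S e n m = 0" using S_lower[OF e_in] .
    show "\<And>n l. l \<le> n \<Longrightarrow> (\<Sum>k\<le>n. S e n k * moment b1 b2 cs e k l) = (if l = n then H e n else 0)"
      using O_at[OF e_in] .
    show "\<And>n l. l \<le> n \<Longrightarrow> (\<Sum>k\<le>n. theta (\<lambda>x. S x n k) e * moment b1 b2 cs e k l)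
       + (\<Sum>k\<le>n. S e n k * moment b1 b2 cs e (Suc k) l) = (if l = n then theta (\<lambda>x. H x n) e else 0)"
      using D_at[OF e_in] .
    show "\<And>n k. n \<le> k \<Longrightarrow> theta (\<lambda>x. S x n k) e = 0" using TS0_at[OF e_in] .
    show "\<And>N v k. (\<And>k. N \<le> k \<Longrightarrow> v k = 0) \<Longrightarrow>
       (\<And>l. l < N \<Longrightarrow> (\<Sum>k<N. v k * moment b1 b2 cs e k l) = 0) \<Longrightarrow> v k = 0"
      using U_at[OF e_in] by blast
    show "\<And>k l. moment b1 b2 cs e (Suc k) l = moment b1 b2 cs e k (l + 2)" by (rule M_shift)
  qed
  have t1: "theta (\<lambda>x. subdiag 1 (S x) n) e = theta (\<lambda>x. S x (n + 1) n) e"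
    by (simp add: subdiag_def)
  have t2: "theta (\<lambda>x. subdiag 2 (S x) n) e = theta (\<lambda>x. S x (n + 2) n) e"
    by (simp add: subdiag_def)
  have t3: "theta (\<lambda>x. aminus (subdiag 1 (S x)) n) e = theta (\<lambda>x. S x (n + 2) (n + 1)) e"
    by (simp add: subdiag_def aminus_def add.assoc)
  show ?thesis unfolding t1 t2 t3 using A.alg_main[of n] by simp
qed

end
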